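(* Let $n,d\ge 1$. For $k=1,2,\ldots$ let $\mathbf M_k\in\mathbb R^{n\times n}$ be invertible, and for $k=0,1,2,\ldots$ let $\mathbf H_k\in\mathbb R^{d\times n}$ and let $\mathbf R_k\in\mathbb R^{d\times d}$ be symmetric positive definite; put ${\boldsymbol\Omega}_k=\mathbf H_k^{\mathrm T}\mathbf R_k^{-1}\mathbf H_k$. For $k\ge l\ge 0$ let $\mathbf M_{k:l}=\mathbf M_k\mathbf M_{k-1}\cdots\mathbf M_{l+1}$ (with $\mathbf M_{k:k}=\mathbf I_n$). Let $\mathbf P_0\in\mathbb R^{n\times n}$ be symmetric positive semi-definite (possibly singular), and define $\mathbf P_k$ by the perfect-model Kalman filter forecast recurrence $$\mathbf P_{k+1}=\mathbf M_{k+1}\big(\mathbf I_n+\mathbf P_k{\boldsymbol\Omega}_k\big)^{-1}\mathbf P_k\mathbf M_{k+1}^{\mathrm T},\qquad k\ge 0.$$ Define ${\boldsymbol\Gamma}_k=\sum_{l=0}^{k-1}\mathbf M_{k:l}^{-\mathrm T}{\boldsymbol\Omega}_l\mathbf M_{k:l}^{-1}$ and ${\boldsymbol\Theta}_k=\mathbf M_{k:0}^{\mathrm T}{\boldsymbol\Gamma}_k\mathbf M_{k:0}=\sum_{l=0}^{k-1}\mathbf M_{l:0}^{\mathrm T}{\boldsymbol\Omega}_l\mathbf M_{l:0}$. Then for every $k\ge 0$, $$\mathbf P_k=\mathbf M_{k:0}\mathbf P_0\mathbf M_{k:0}^{\mathrm T}\big(\mathbf I_n+{\boldsymbol\Gamma}_k\mathbf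 M_{k:0}\mathbf P_0\mathbf M_{k:0}^{\mathrm T}\big)^{-1}=\mathbf M_{k:0}\mathbf P_0\big(\mathbf I_n+{\boldsymbol\Theta}_k\mathbf P_0\big)^{-1}\mathbf M_{k:0}^{\mathrm T}.$$
   Context: Empty sums are zero, so ${\boldsymbol\Gamma}_0={\boldsymbol\Theta}_0=\mathbf 0$. *)

theory Defs
  imports "HOL-Analysis.Analysis"
begin

definition sym_pos_def_mat :: "real^'d^'d \<Rightarrow> bool" where
  "sym_pos_def_mat A \<longleftrightarrow> transpose A = A \<and> (\<forall>x. x \<noteq> 0 \<longrightarrow> x \<bullet> (A *v x) > 0)"

definition sym_pos_semidef_mat :: "real^'n^'n \<Rightarrow> bool" where
  "sym_pos_semidef_mat A \<longleftrightarrow> transpose A = A \<and> (\<forall>x. x \<bullet> (A *v x) \<ge> 0)"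

text \<open>mprod M l k is M_{k:l} = M_k M_{k-1} ... M_{l+1} (identity if k \<le> l).\<close>
primrec mprod :: "(nat \<Rightarrow> real^'n^'n) \<Rightarrow> nat \<Rightarrow> nat \<Rightarrow> real^'n^'n" where
  "mprod M l 0 = mat 1"
| "mprod M l (Suc k) = (if Suc k \<le> l then mat 1 else M (Suc k) ** mprod M l k)"

definition Omega :: "(nat \<Rightarrow> real^'n^'d) \<Rightarrow> (nat \<Rightarrow> real^'d^'d) \<Rightarrow> nat \<Rightarrow> real^'n^'n" where
  "Omega H R k = transpose (H k) ** matrix_inv (R k) ** H k"

primrec kf_P :: "(nat \<Rightarrow> real^'n^'n) \<Rightarrow> (nat \<Rightarrow> real^'n^'n) \<Rightarrow> real^'n^'n \<Rightarrow> nat \<Rightarrow> real^'n^'n" where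
  "kf_P M Om P0 0 = P0"
| "kf_P M Om P0 (Suc k) =
     M (Suc k) ** matrix_inv (mat 1 + kf_P M Om P0 k ** Om k) ** kf_P M Om P0 k ** transpose (M (Suc k))"

definition Gamma_mat :: "(nat \<Rightarrow> real^'n^'n) \<Rightarrow> (nat \<Rightarrow> real^'n^'n) \<Rightarrow> nat \<Rightarrow> real^'n^'n" where
  "Gamma_mat M Om k = (\<Sum>l<k. transpose (matrix_inv (mprod M l k)) ** Om l ** matrix_inv (mprod M l k))"

definition Theta_mat :: "(nat \<Rightarrow> real^'n^'n) \<Rightarrow> (nat \<Rightarrow> real^'n^'n) \<Rightarrow> nat \<Rightarrow> real^'n^'n" where
  "Theta_mat M Om k = transpose (mprod M 0 k) ** Gamma_mat M Om k ** mprod M 0 k"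

end

theory Submission imports Defs begin

lemma inv_lr:
  fixes A :: "real^'n^'n"
  assumes "invertible A"
  shows "matrix_inv A ** A = mat 1 \<and> A ** matrix_inv A = mat 1"
proof -
  have "\<exists>A'. A ** A' = mat 1 \<and> A' ** A = mat 1" using assms unfolding invertible_def by blast
  from someI_ex[OF this] show ?thesis unfolding matrix_inv_def by blast
qed

lemma inv_l: "invertible (A::real^'n^'n) \<Longrightarrow> matrix_inv A ** A = mat 1" using inv_lr by blast
lemma inv_r: "invertible (A::real^'n^'n) \<Longrightarrow> A ** matrix_inv A = mat 1" using inv_lr by blast

lemma inv_l2: "invertible (A::real^'n^'n) \<Longrightarrow> X ** matrix_inv A ** A = X"
  by (metis inv_l matrix_mul_assoc matrix_mul_rid)
lemma inv_r2: "invertible (A::real^'n^'n) \<Longrightarrow> X ** A ** matrix_inv A = X"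
  by (metis inv_r matrix_mul_assoc matrix_mul_rid)

lemma inv_invertible: "invertible (A::real^'n^'n) \<Longrightarrow> invertible (matrix_inv A)"
  using inv_lr unfolding invertible_def by blast

lemma mat1_invertible: "invertible (mat 1 :: real^'n^'n)"
  unfolding invertible_def by (metis matrix_mul_lid)

lemma inv_unique:
  fixes A B :: "real^'n^'n"
  assumes "invertible A" "A ** B = mat 1"
  shows "matrix_inv A = B"
  by (metis assms inv_l matrix_mul_assoc matrix_mul_lid matrix_mul_rid)

lemma matrix_add_rdistrib: "((B + C) ** A) = (B ** A) + (C ** A)"
  by (vector matrix_matrix_mult_def sum.distrib[symmetric] field_simps)

lemma inv_ker:
  fixes A :: "real^'n^'n"
  shows "invertible A \<longleftrightarrow> (\<forall>x. A *v x = 0 \<longrightarrow> x = 0)"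
  using invertible_left_inverse matrix_left_invertible_ker by metis

lemma dot_tr: "(transpose A *v x) \<bullet> y = x \<bullet> ((A::real^'n^'m) *v y)"
  by (simp add: dot_lmul_matrix)

lemma psd_zero:
  fixes B :: "real^'n^'n"
  assumes sym: "transpose B = B" and psd: "\<forall>x. x \<bullet> (B *v x) \<ge> 0" and z: "x \<bullet> (B *v x) = 0"
  shows "B *v x = 0"
proof (rule ccontr)
  assume ne: "B *v x \<noteq> 0"
  define y where "y = B *v x"
  define a where "a = y \<bullet> y"
  define c where "c = y \<bullet> (B *v y)"
  have a: "a > 0" using ne unfolding a_def y_def by simp
  have xy: "x \<bullet> (B *v y) = a"
    using dot_tr[of B x y] sym unfolding a_def y_def by (simp add: inner_commute)
  have q: "0 \<le> 2 * t * a + t^2 * c" for t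
  proof -
    have "0 \<le> (x + t *\<^sub>R y) \<bullet> (B *v (x + t *\<^sub>R y))" using psd by blast
    also have "\<dots> = x \<bullet> (B *v x) + t * (x \<bullet> (B *v y)) + t * (y \<bullet> (B *v x)) + t^2 * c"
      by (simp add: algebra_simps inner_add_left inner_add_right c_def power2_eq_square)
    also have "\<dots> = 2 * t * a + t^2 * c" using z xy unfolding a_def y_def by simp
    finally show ?thesis .
  qed
  define t where "t = - a / (\<bar>c\<bar> + 1)"
  have h: "0 \<le> 2 * t * a + t^2 * c" by (rule q)
  have "t^2 * c \<le> t^2 * \<bar>c\<bar>" by (simp add: mult_left_mono)
  also have "\<dots> < t^2 * (\<bar>c\<bar> + 1)"
  proof -
    have "t \<noteq> 0" using a by (simp add: t_def)
    then have "t^2 > 0" by simp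
    then show ?thesis by (simp add: mult_strict_left_mono)
  qed
  also have "\<dots> = - t * a" by (simp add: t_def power2_eq_square)
  finally have "t^2 * c < - t * a" .
  moreover have "t * a < 0" using a by (simp add: t_def mult_neg_pos divide_neg_pos)
  ultimately show False using h by linarith
qed

lemma inv_one_plus:
  fixes X Y :: "real^'n^'n"
  assumes sym: "transpose X = X" and psdX: "\<forall>x. x \<bullet> (X *v x) \<ge> 0"
    and psdY: "\<forall>x. x \<bullet> (Y *v x) \<ge> 0"
  shows "invertible (mat 1 + X ** Y)"
  unfolding inv_ker
proof (intro allI impI)
  fix x assume h: "(mat 1 + X ** Y) *v x = 0"
  define y where "y = Y *v x"
  have xe: "x = - (X *v y)" using h unfolding y_def
    by (simp add: matrix_vector_mult_add_rdistrib matrix_vector_mul_assoc[symmetric] eq_neg_iff_add_eq_0)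
  have "0 \<le> x \<bullet> y" using psdY unfolding y_def by blast
  also have "x \<bullet> y = - (y \<bullet> (X *v y))" using xe by (simp add: inner_commute)
  finally have "y \<bullet> (X *v y) = 0" using psdX by (metis neg_0_le_iff_le order_antisym)
  then have "X *v y = 0" using psd_zero[OF sym psdX] by blast
  then show "x = 0" using xe by simp
qed

lemma swap_inv:
  fixes X :: "real^'n^'m" and Y :: "real^'m^'n"
  assumes "invertible (mat 1 + X ** Y)"
  shows "invertible (mat 1 + Y ** X)"
  unfolding inv_ker
proof (intro allI impI)
  fix z assume h: "(mat 1 + Y ** X) *v z = 0"
  have ze: "z = - (Y *v (X *v z))" using h
    by (simp add: matrix_vector_mult_add_rdistrib matrix_vector_mul_assoc[symmetric] eq_neg_iff_add_eq_0)
  have "(mat 1 + X ** Y) *v (X *v z) = X *v ((mat 1 + Y ** X) *v z)"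
    by (simp add: matrix_vector_mult_add_rdistrib matrix_vector_mul_assoc[symmetric] matrix_vector_right_distrib)
  also have "\<dots> = 0" using h by simp
  finally have "X *v z = 0" using assms unfolding inv_ker by blast
  then show "z = 0" using ze by simp
qed

lemma msum_l: "(A::real^'n^'m) ** sum f S = sum (\<lambda>i. A ** f i) S"
  by (induction S rule: infinite_finite_induct) (auto simp: matrix_add_ldistrib)

lemma msum_r: "sum f S ** (A::real^'n^'m) = sum (\<lambda>i. f i ** A) S"
  by (induction S rule: infinite_finite_induct) (auto simp: matrix_add_rdistrib)

lemma mprod_le: "k \<le> l \<Longrightarrow> mprod M l k = mat 1"
  by (induction k) auto

lemma mprod_split: "l \<le> k \<Longrightarrow> mprod M 0 k = mprod M l k ** mprod M 0 l"
proof (induction k)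
  case 0 then show ?case by simp
next
  case (Suc k)
  show ?case
  proof (cases "l = Suc k")
    case True then show ?thesis by (simp add: mprod_le)
  next
    case False
    then have "l \<le> k" using Suc.prems by simp
    then show ?thesis using Suc.IH False Suc.prems by (simp add: matrix_mul_assoc)
  qed
qed

lemma mprod_inv:
  assumes "\<And>k. k \<ge> 1 \<Longrightarrow> invertible (M k)"
  shows "invertible (mprod M l k)"
proof (induction k)
  case 0 then show ?case by (simp add: mat1_invertible)
next
  case (Suc k) then show ?case using assms[of "Suc k"] by (simp add: mat1_invertible invertible_mult)
qed

lemma Theta_eq:
  assumes "\<And>k. k \<ge> 1 \<Longrightarrow> invertible (M k)"
  shows "Theta_mat M Om k = (\<Sum>l<k. transpose (mprod M 0 l) ** Om l ** mprod M 0 l)"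
proof -
  have "Theta_mat M Om k = (\<Sum>l<k. transpose (mprod M 0 k) **
      (transpose (matrix_inv (mprod M l k)) ** Om l ** matrix_inv (mprod M l k)) ** mprod M 0 k)"
    unfolding Theta_mat_def Gamma_mat_def by (simp add: msum_l msum_r)
  also have "\<dots> = (\<Sum>l<k. transpose (mprod M 0 l) ** Om l ** mprod M 0 l)"
  proof (rule sum.cong[OF refl])
    fix l assume "l \<in> {..<k}"
    then have lk: "l \<le> k" by simp
    define B where "B = mprod M l k"
    define C where "C = mprod M 0 l"
    have Binv: "invertible B" unfolding B_def by (rule mprod_inv[OF assms])
    have A: "mprod M 0 k = B ** C" unfolding B_def C_def by (rule mprod_split[OF lk])
    have e1: "transpose B ** transpose (matrix_inv B) = mat 1"
      by (metis inv_l[OF Binv] matrix_transpose_mul transpose_mat)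
    have e1': "X ** transpose B ** transpose (matrix_inv B) = X" for X :: "real^'a^'a"
      by (metis e1 matrix_mul_assoc matrix_mul_rid)
    show "transpose (mprod M 0 k) ** (transpose (matrix_inv (mprod M l k)) ** Om l ** matrix_inv (mprod M l k)) ** mprod M 0 k
        = transpose (mprod M 0 l) ** Om l ** mprod M 0 l"
      unfolding A B_def[symmetric] C_def[symmetric]
      by (simp add: matrix_transpose_mul matrix_mul_assoc e1' inv_l2[OF Binv])
  qed
  finally show ?thesis .
qed

lemma Omega_psd:
  assumes "sym_pos_def_mat (R k)"
  shows "x \<bullet> (Omega H R k *v x) \<ge> 0"
proof -
  have pd: "\<And>y. y \<noteq> 0 \<Longrightarrow> y \<bullet> (R k *v y) > 0" using assms unfolding sym_pos_def_mat_def by blast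
  have Rinv: "invertible (R k)" unfolding inv_ker
    using pd by (metis inner_zero_right less_irrefl)
  have Rp: "w \<bullet> (matrix_inv (R k) *v w) \<ge> 0" for w
  proof -
    define y where "y = matrix_inv (R k) *v w"
    have "R k *v y = w" unfolding y_def by (simp add: matrix_vector_mul_assoc inv_r[OF Rinv])
    then have "w \<bullet> y = y \<bullet> (R k *v y)" by (simp add: inner_commute)
    moreover have "y \<bullet> (R k *v y) \<ge> 0" using pd by (cases "y = 0") (auto intro: less_imp_le)
    ultimately show ?thesis unfolding y_def by simp
  qed
  have "x \<bullet> (Omega H R k *v x) = (H k *v x) \<bullet> (matrix_inv (R k) *v (H k *v x))"
  proof -
    define w where "w = matrix_inv (R k) *v (H k *v x)"
    have "Omega H R k *v x = transpose (H k) *v w"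
      unfolding Omega_def w_def by (simp only: matrix_vector_mul_assoc matrix_mul_assoc)
    then have "x \<bullet> (Omega H R k *v x) = (transpose (H k) *v w) \<bullet> x" by (simp add: inner_commute)
    also have "\<dots> = w \<bullet> (H k *v x)" by (rule dot_tr)
    finally show ?thesis unfolding w_def by (simp add: inner_commute)
  qed
  then show ?thesis using Rp by simp
qed

lemma main_gen:
  fixes M Om :: "nat \<Rightarrow> real^'n^'n" and P0 :: "real^'n^'n"
  assumes M_inv: "\<And>k. k \<ge> 1 \<Longrightarrow> invertible (M k)"
    and P0s: "transpose P0 = P0" and P0p: "\<forall>x. x \<bullet> (P0 *v x) \<ge> 0"
    and OmP: "\<And>k x. x \<bullet> (Om k *v x) \<ge> 0"
  shows "kf_P M Om P0 k = mprod M 0 k ** P0 ** matrix_inv (mat 1 + Theta_mat M Om k ** P0) ** transpose (mprod M 0 k)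
     \<and> invertible (mat 1 + Theta_mat M Om k ** P0)"
proof -
  define Th where "Th k = (\<Sum>l<k. transpose (mprod M 0 l) ** Om l ** mprod M 0 l)" for k
  have ThS: "Th (Suc k) = Th k + transpose (mprod M 0 k) ** Om k ** mprod M 0 k" for k
    unfolding Th_def by simp
  have ThP: "\<forall>x. x \<bullet> (Th k *v x) \<ge> 0" for k
  proof (induction k)
    case 0 then show ?case by (simp add: Th_def)
  next
    case (Suc k)
    show ?case
    proof
      fix x
      have "x \<bullet> ((transpose (mprod M 0 k) ** Om k ** mprod M 0 k) *v x)
          = (transpose (mprod M 0 k) *v (Om k *v (mprod M 0 k *v x))) \<bullet> x"
        by (simp only: matrix_vector_mul_assoc matrix_mul_assoc inner_commute)
      also have "\<dots> = (Om k *v (mprod M 0 k *v x)) \<bullet> (mprod M 0 k *v x)" by (rule dot_tr)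
      also have "\<dots> \<ge> 0" using OmP by (simp add: inner_commute)
      finally have "x \<bullet> ((transpose (mprod M 0 k) ** Om k ** mprod M 0 k) *v x) \<ge> 0" .
      then show "x \<bullet> (Th (Suc k) *v x) \<ge> 0" using Suc[rule_format, of x]
        by (simp add: ThS matrix_vector_mult_add_rdistrib inner_add_right)
    qed
  qed
  have Sinv: "invertible (mat 1 + Th k ** P0)" for k
    by (rule swap_inv[OF inv_one_plus[OF P0s P0p ThP]])
  have "kf_P M Om P0 k = mprod M 0 k ** P0 ** matrix_inv (mat 1 + Th k ** P0) ** transpose (mprod M 0 k)"
  proof (induction k)
    case 0
    have "matrix_inv (mat 1 :: real^'n^'n) = mat 1" by (rule inv_unique[OF mat1_invertible]) simp
    then show ?case by (simp add: Th_def)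
  next
    case (Suc k)
    define A where "A = mprod M 0 k"
    define S where "S = mat 1 + Th k ** P0"
    define S' where "S' = mat 1 + Th (Suc k) ** P0"
    define P where "P = kf_P M Om P0 k"
    define W where "W = transpose A ** Om k ** A"
    define Q where "Q = A ** P0 ** matrix_inv S' ** transpose A"
    have SI: "invertible S" unfolding S_def by (rule Sinv)
    have SI': "invertible S'" unfolding S'_def by (rule Sinv)
    have IH: "P = A ** P0 ** matrix_inv S ** transpose A" unfolding P_def A_def S_def by (rule Suc.IH)
    have S'eq: "S' = S + W ** P0" unfolding S'_def S_def W_def A_def
      by (simp add: ThS matrix_add_rdistrib add.assoc)
    have key1: "(mat 1 + P ** Om k) ** A ** P0 = A ** P0 ** matrix_inv S ** S'"
    proof -
      have "(mat 1 + P ** Om k) ** A ** P0 = A ** P0 + A ** P0 ** matrix_inv S ** W ** P0"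
        unfolding IH W_def by (simp add: matrix_add_rdistrib matrix_mul_assoc)
      also have "\<dots> = A ** P0 ** matrix_inv S ** S'"
        unfolding S'eq by (simp add: matrix_add_ldistrib matrix_mul_assoc inv_l2[OF SI])
      finally show ?thesis .
    qed
    have inv1: "invertible (mat 1 + P ** Om k)"
    proof -
      have "mat 1 + (transpose A ** Om k) ** (A ** P0 ** matrix_inv S) = S' ** matrix_inv S"
        unfolding S'eq W_def by (simp add: matrix_add_rdistrib matrix_mul_assoc inv_r[OF SI])
      then have "invertible (mat 1 + (transpose A ** Om k) ** (A ** P0 ** matrix_inv S))"
        using invertible_mult[OF SI' inv_invertible[OF SI]] by simp
      from swap_inv[OF this] show ?thesis unfolding IH by (simp add: matrix_mul_assoc)
    qed
    have "(mat 1 + P ** Om k) ** Q = P"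
    proof -
      have "(mat 1 + P ** Om k) ** Q = ((mat 1 + P ** Om k) ** A ** P0) ** matrix_inv S' ** transpose A"
        unfolding Q_def by (simp add: matrix_mul_assoc)
      also have "\<dots> = A ** P0 ** matrix_inv S ** S' ** matrix_inv S' ** transpose A" by (simp only: key1)
      also have "\<dots> = P" by (simp add: inv_r2[OF SI'] IH)
      finally show ?thesis .
    qed
    then have PQ: "matrix_inv (mat 1 + P ** Om k) ** P = Q"
      by (metis inv_l[OF inv1] matrix_mul_assoc matrix_mul_lid)
    have "kf_P M Om P0 (Suc k) = M (Suc k) ** (matrix_inv (mat 1 + P ** Om k) ** P) ** transpose (M (Suc k))"
      unfolding P_def by (simp add: matrix_mul_assoc)
    also have "\<dots> = mprod M 0 (Suc k) ** P0 ** matrix_inv S' ** transpose (mprod M 0 (Suc k))"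
      unfolding PQ Q_def A_def by (simp add: matrix_mul_assoc matrix_transpose_mul)
    finally show ?case unfolding S'_def .
  qed
  then show ?thesis using Theta_eq[OF M_inv, where Om=Om and k=k] Sinv[of k] unfolding Th_def by simp
qed

theorem mainTheorem1:
  fixes M :: "nat \<Rightarrow> real^'n^'n"
    and H :: "nat \<Rightarrow> real^'n^'d"
    and R :: "nat \<Rightarrow> real^'d^'d"
    and P0 :: "real^'n^'n"
  assumes M_inv: "\<And>k. k \<ge> 1 \<Longrightarrow> invertible (M k)"
    and R_pd: "\<And>k. sym_pos_def_mat (R k)"
    and P0_psd: "sym_pos_semidef_mat P0"
  shows "kf_P M (Omega H R) P0 k =
           mprod M 0 k ** P0 ** transpose (mprod M 0 k) **
             matrix_inv (mat 1 + Gamma_mat M (Omega H R) k ** mprod M 0 k ** P0 ** transpose (mprod M 0 k))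
       \<and> kf_P M (Omega H R) P0 k =
           mprod M 0 k ** P0 ** matrix_inv (mat 1 + Theta_mat M (Omega H R) k ** P0) ** transpose (mprod M 0 k)"
proof -
  have P0s: "transpose P0 = P0" and P0p: "\<forall>x. x \<bullet> (P0 *v x) \<ge> 0"
    using P0_psd unfolding sym_pos_semidef_mat_def by auto
  note mg = main_gen[OF M_inv P0s P0p Omega_psd[OF R_pd], where k=k]
  define A where "A = mprod M 0 k"
  define G where "G = Gamma_mat M (Omega H R) k"
  define S where "S = mat 1 + Theta_mat M (Omega H R) k ** P0"
  define T where "T = mat 1 + G ** A ** P0 ** transpose A"
  have two: "kf_P M (Omega H R) P0 k = A ** P0 ** matrix_inv S ** transpose A"
    and SI: "invertible S" using mg unfolding A_def S_def by auto
  have ATI: "invertible (transpose A)" unfolding A_def by (rule transpose_invertible[OF mprod_inv[OF M_inv]])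
  have eq: "transpose A ** T = S ** transpose A"
    unfolding T_def S_def Theta_mat_def G_def[symmetric] A_def[symmetric]
    by (simp add: matrix_add_ldistrib matrix_add_rdistrib matrix_mul_assoc)
  have "T = matrix_inv (transpose A) ** (transpose A ** T)"
    by (simp add: matrix_mul_assoc inv_l[OF ATI])
  then have Te: "T = matrix_inv (transpose A) ** S ** transpose A"
    unfolding eq by (simp add: matrix_mul_assoc)
  have TI: "invertible T" unfolding Te
    by (intro invertible_mult inv_invertible ATI SI)
  have "transpose A ** matrix_inv T = matrix_inv S ** S ** transpose A ** matrix_inv T"
    by (simp add: inv_l[OF SI])
  also have "\<dots> = matrix_inv S ** (transpose A ** T) ** matrix_inv T"
    by (simp add: eq matrix_mul_assoc)
  also have "\<dots> = matrix_inv S ** transpose A"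
    by (simp add: matrix_mul_assoc inv_r2[OF TI])
  finally have sw: "matrix_inv S ** transpose A = transpose A ** matrix_inv T" by simp
  have "kf_P M (Omega H R) P0 k = A ** P0 ** (matrix_inv S ** transpose A)"
    unfolding two by (simp add: matrix_mul_assoc)
  also have "\<dots> = A ** P0 ** transpose A ** matrix_inv T"
    unfolding sw by (simp add: matrix_mul_assoc)
  finally have one: "kf_P M (Omega H R) P0 k = A ** P0 ** transpose A ** matrix_inv T" .
  show ?thesis using one two unfolding A_def T_def G_def S_def by simp
qed

end
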